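(* Let $x\ge 0$ and $y,z>0$ (the approximation is intended for the regime $x\ll y,z$). Let $a=(y+z)/2$ and $g=\sqrt{yz}$. Then $$R_D(x,y,z)=R_D(0,y,z)+\frac{3\sqrt x}{gz}\left(-1+\frac{\pi\theta}{4}\sqrt{\frac xa}\right),$$ where $\frac{1}{1+\sqrt{x/a}}<\theta<\left(\frac ag\right)^{3/2}\left(1+\frac ya\right)$.
   Context: For $x,y\ge0$ not both zero and $z>0$: $R_D(x,y,z)=\frac32\int_0^\infty[(t+x)(t+y)]^{-1/2}(t+z)^{-3/2}\,dt$. *)

theory Defs
  imports "HOL-Analysis.Analysis"
begin

text \<open>Carlson's symmetric elliptic integral of the second kind,
  R_D(x,y,z) = 3/2 * integral over (0,inf) of ((t+x)(t+y))^(-1/2) (t+z)^(-3/2) dt,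
  for x,y >= 0 not both zero and z > 0 (absolutely convergent improper integral,
  taken here as the Henstock-Kurzweil integral over the half-line).\<close>
definition carlson_RD :: "real \<Rightarrow> real \<Rightarrow> real \<Rightarrow> real" where
  "carlson_RD x y z =
     3 / 2 * integral {0<..} (\<lambda>t. 1 / (sqrt ((t + x) * (t + y)) * (t + z) powr (3/2)))"

end

theory Submission
  imports Defs "HOL-Real_Asymp.Real_Asymp"
begin

lemma sqrt_sqrt_assoc: "0 \<le> b \<Longrightarrow> sqrt b * (sqrt b * c) = b * c"
  by (metis mult.assoc real_sqrt_mult_self abs_of_nonneg)


lemma FTC0:
  fixes f F :: "real \<Rightarrow> real"
  assumes D: "\<And>t. t > 0 \<Longrightarrow> (F has_real_derivative f t) (at t)"
    and C: "\<And>t. t > 0 \<Longrightarrow> isCont f t"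
    and P: "\<And>t. t > 0 \<Longrightarrow> 0 \<le> f t"
    and A: "(F \<longlongrightarrow> A) (at_right 0)" and B: "(F \<longlongrightarrow> B) at_top"
  shows "(f has_integral (B - A)) {0<..}"
proof -
  have "set_integrable lborel (einterval 0 \<infinity>) f \<and> (LBINT x=0..\<infinity>. f x) = B - A"
    apply (intro conjI interval_integral_FTC_nonneg[of 0 \<infinity> F f])
    using D C P A B by (auto simp: zero_ereal_def ereal_tendsto_simps)
  moreover have "einterval 0 \<infinity> = {0::real<..}" by (metis einterval_eq_Ici zero_ereal_def)
  ultimately have 1: "set_integrable lborel {0<..} f" "(LINT x:{0<..}|lborel. f x) = B - A"
    by (auto simp: interval_lebesgue_integral_0_infty zero_ereal_def[symmetric])
  from set_borel_integral_eq_integral[OF 1(1)] 1(2) show ?thesis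
    by (metis integrable_integral)
qed

lemma I1:
  fixes x :: real assumes x: "x > 0"
  shows "((\<lambda>t. 1 / sqrt t - 1 / sqrt (t + x)) has_integral 2 * sqrt x) {0<..}"
proof -
  have "((\<lambda>t. 1 / sqrt t - 1 / sqrt (t + x)) has_integral (0 - (- 2 * sqrt x))) {0<..}"
  proof (rule FTC0[where F="\<lambda>t. 2 * sqrt t - 2 * sqrt (t + x)"])
    fix t :: real assume t: "t > 0"
    show "((\<lambda>t. 2 * sqrt t - 2 * sqrt (t + x)) has_real_derivative 1 / sqrt t - 1 / sqrt (t + x)) (at t)"
      using t x by (auto intro!: derivative_eq_intros simp: field_simps)
    show "isCont (\<lambda>t. 1 / sqrt t - 1 / sqrt (t + x)) t"
      using t x by (auto intro!: continuous_intros)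
    have "sqrt t \<le> sqrt (t + x)" using x by simp
    then show "0 \<le> 1 / sqrt t - 1 / sqrt (t + x)"
      using t x by (simp add: frac_le)
  next
    show "((\<lambda>t. 2 * sqrt t - 2 * sqrt (t + x)) \<longlongrightarrow> - 2 * sqrt x) (at_right 0)"
      using x by (auto intro!: tendsto_eq_intros)
    show "((\<lambda>t. 2 * sqrt t - 2 * sqrt (t + x)) \<longlongrightarrow> 0) at_top"
      using x by real_asymp
  qed
  then show ?thesis by simp
qed

lemma I3:
  fixes b :: real assumes b: "b > 0"
  shows "((\<lambda>t. 1 / (sqrt t * (t + b))) has_integral pi / sqrt b) {0<..}"
proof -
  have "((\<lambda>t. 1 / (sqrt t * (t + b))) has_integral (pi / sqrt b - 0)) {0<..}"
  proof (rule FTC0[where F="\<lambda>t. 2 / sqrt b * arctan (sqrt t / sqrt b)"])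
    fix t :: real assume t: "t > 0"
    show "((\<lambda>t. 2 / sqrt b * arctan (sqrt t / sqrt b)) has_real_derivative 1 / (sqrt t * (t + b))) (at t)"
      apply (insert t b)
      apply (rule DERIV_cong)
      apply (rule derivative_eq_intros refl | simp)+
      apply (simp add: power_divide divide_simps)
      done
    show "isCont (\<lambda>t. 1 / (sqrt t * (t + b))) t"
      using t b by (auto intro!: continuous_intros)
    show "0 \<le> 1 / (sqrt t * (t + b))"
      using t b by simp
  next
    show "((\<lambda>t. 2 / sqrt b * arctan (sqrt t / sqrt b)) \<longlongrightarrow> 0) (at_right 0)"
      using b by (auto intro!: tendsto_eq_intros)
    show "((\<lambda>t. 2 / sqrt b * arctan (sqrt t / sqrt b)) \<longlongrightarrow> pi / sqrt b) at_top"
      using b apply real_asymp by (simp add: sqrt_def)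
  qed
  then show ?thesis by simp
qed

lemma I4:
  fixes m :: real assumes m: "m > 0"
  shows "((\<lambda>t. 1 / (sqrt t * (t + m)^2)) has_integral pi / (2 * m * sqrt m)) {0<..}"
proof -
  have "((\<lambda>t. 1 / (sqrt t * (t + m)^2)) has_integral (pi / (2 * m * sqrt m) - 0)) {0<..}"
  proof (rule FTC0[where F="\<lambda>t. sqrt t / (m * (t + m)) + arctan (sqrt t / sqrt m) / (m * sqrt m)"])
    fix t :: real assume t: "t > 0"
    show "((\<lambda>t. sqrt t / (m * (t + m)) + arctan (sqrt t / sqrt m) / (m * sqrt m)) has_real_derivative 1 / (sqrt t * (t + m)^2)) (at t)"
      apply (insert t m)
      apply (rule DERIV_cong)
      apply (rule derivative_eq_intros refl | simp)+
      apply (simp add: power_divide divide_simps)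
      apply (simp add: algebra_simps power2_eq_square sqrt_sqrt_assoc)
      done
    show "isCont (\<lambda>t. 1 / (sqrt t * (t + m)^2)) t"
      using t m by (auto intro!: continuous_intros)
    show "0 \<le> 1 / (sqrt t * (t + m)^2)"
      using t m by simp
  next
    show "((\<lambda>t. sqrt t / (m * (t + m)) + arctan (sqrt t / sqrt m) / (m * sqrt m)) \<longlongrightarrow> 0) (at_right 0)"
      using m by (auto intro!: tendsto_eq_intros)
    show "((\<lambda>t. sqrt t / (m * (t + m)) + arctan (sqrt t / sqrt m) / (m * sqrt m)) \<longlongrightarrow> pi / (2 * m * sqrt m)) at_top"
      using m apply real_asymp by (simp add: sqrt_def field_simps)
  qed
  then show ?thesis by simp
qed

lemma I2:
  fixes x c :: real assumes x: "x > 0" and c: "c > 0" and xc: "x \<noteq> c"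
  shows "((\<lambda>t. sqrt t / ((t + x) * (t + c))) has_integral pi / (sqrt x + sqrt c)) {0<..}"
proof -
  have "((\<lambda>t. sqrt t / ((t + x) * (t + c))) has_integral (pi * (sqrt c - sqrt x) / (c - x) - 0)) {0<..}"
  proof (rule FTC0[where F="\<lambda>t. 2 / (c - x) * (sqrt c * arctan (sqrt t / sqrt c) - sqrt x * arctan (sqrt t / sqrt x))"])
    fix t :: real assume t: "t > 0"
    show "((\<lambda>t. 2 / (c - x) * (sqrt c * arctan (sqrt t / sqrt c) - sqrt x * arctan (sqrt t / sqrt x))) has_real_derivative sqrt t / ((t + x) * (t + c))) (at t)"
      apply (insert t x c xc)
      apply (rule DERIV_cong)
      apply (rule derivative_eq_intros refl | simp)+
      apply (simp add: power_divide divide_simps)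
      apply (simp add: algebra_simps power2_eq_square)
      done
    show "isCont (\<lambda>t. sqrt t / ((t + x) * (t + c))) t"
      using t x c by (auto intro!: continuous_intros)
    show "0 \<le> sqrt t / ((t + x) * (t + c))"
      using t x c by simp
  next
    show "((\<lambda>t. 2 / (c - x) * (sqrt c * arctan (sqrt t / sqrt c) - sqrt x * arctan (sqrt t / sqrt x))) \<longlongrightarrow> 0) (at_right 0)"
      using x c xc by (auto intro!: tendsto_eq_intros)
    show "((\<lambda>t. 2 / (c - x) * (sqrt c * arctan (sqrt t / sqrt c) - sqrt x * arctan (sqrt t / sqrt x))) \<longlongrightarrow> pi * (sqrt c - sqrt x) / (c - x)) at_top"
      using x c xc apply real_asymp by (simp add: sqrt_def algebra_simps)
  qed
  moreover have "pi * (sqrt c - sqrt x) / (c - x) = pi / (sqrt x + sqrt c)"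
  proof -
    have "c - x = (sqrt c - sqrt x) * (sqrt x + sqrt c)" using x c by (simp add: algebra_simps)
    moreover have "sqrt c \<noteq> sqrt x" using xc x c by simp
    ultimately show ?thesis by simp
  qed
  ultimately show ?thesis by simp
qed


lemma powr32: "(u::real) > 0 \<Longrightarrow> u powr (3/2) = u * sqrt u"
proof -
  assume u: "u > 0"
  have h1: "u powr (3/2) = u powr 1 * u powr (1/2)" by (subst powr_add[symmetric]) simp
  have h2: "u powr (1/2) = sqrt u" using u by (simp add: powr_half_sqrt)
  have h3: "u powr 1 = u" using u by simp
  show ?thesis by (simp only: h1 h2 h3)
qed

lemma F_eq:
  fixes t x y z :: real
  assumes "t > 0" "x \<ge> 0" "y > 0" "z > 0"
  shows "1 / (sqrt ((t + x) * (t + y)) * (t + z) powr (3/2))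
       = 1 / (sqrt (t + x) * (sqrt ((t + y) * (t + z)) * (t + z)))"
  using assms by (simp add: powr32 real_sqrt_mult mult_ac)

lemma amgm: "(y::real) > 0 \<Longrightarrow> z > 0 \<Longrightarrow> 2 * sqrt (y * z) \<le> y + z"
proof -
  assume y: "y > 0" and z: "z > 0"
  have "0 \<le> (sqrt y - sqrt z)^2" by simp
  then show ?thesis using y z by (simp add: power2_eq_square algebra_simps real_sqrt_mult)
qed

lemma phi_nonneg: "(t::real) > 0 \<Longrightarrow> x \<ge> 0 \<Longrightarrow> 0 \<le> 1 / sqrt t - 1 / sqrt (t + x)"
  by (simp add: frac_le)

lemma phi_lower:
  fixes t x :: real assumes t: "t > 0" and x: "x > 0"
  shows "x / (2 * sqrt t * (t + x)) \<le> 1 / sqrt t - 1 / sqrt (t + x)"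
proof -
  define u where "u = sqrt t"
  define v where "v = sqrt (t + x)"
  have u: "u > 0" "u * u = t" using t by (auto simp: u_def)
  have v: "v > 0" "v * v = t + x" using t x by (auto simp: v_def)
  have "sqrt (t * (t + x)) \<le> t + x / 2"
    using t x by (intro real_le_lsqrt) (auto simp: power2_eq_square algebra_simps)
  then have uv: "u * v \<le> t + x / 2" by (simp add: u_def v_def real_sqrt_mult)
  have "x \<le> 2 * (v * v) - 2 * (u * v)" using uv v by linarith
  then have "x \<le> (v - u) * (2 * v)" by (simp add: algebra_simps)
  then have "x / (2 * v) \<le> v - u" using v by (simp add: pos_divide_le_eq)
  then have "x / (2 * v) / (u * v) \<le> (v - u) / (u * v)" using u v by (intro divide_right_mono) auto
  moreover have "x / (2 * v) / (u * v) = x / (2 * u * (t + x))"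
  proof -
    have "2 * u * (t + x) = 2 * v * (u * v)" using v by (simp add: v(2)[symmetric] algebra_simps)
    then show ?thesis by (simp add: v(2))
  qed
  moreover have "(v - u) / (u * v) = 1 / u - 1 / v" using u v by (simp add: field_simps)
  ultimately have "x / (2 * u * (t + x)) \<le> 1 / u - 1 / v" by linarith
  then show ?thesis by (simp add: u_def v_def)
qed

lemma phi_upper:
  fixes t x :: real assumes t: "t > 0" and x: "x \<ge> 0"
  shows "1 / sqrt t - 1 / sqrt (t + x) \<le> x / (2 * t * sqrt t)"
proof -
  define u where "u = sqrt t"
  define v where "v = sqrt (t + x)"
  have u: "u > 0" "u * u = t" using t by (auto simp: u_def)
  have v: "v > 0" "v * v = t + x" using t x by (auto simp: v_def)
  have uv: "u \<le> v" using x by (simp add: u_def v_def)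
  have xe: "x = (v - u) * (u + v)" using u v by (simp add: algebra_simps)
  have "1 / u - 1 / v = (v - u) / (u * v)" using u v by (simp add: field_simps)
  also have "\<dots> = x / (u * v * (u + v))" using u v by (simp add: xe)
  finally have "1 / u - 1 / v = x / (u * v * (u + v))" .
  also have "\<dots> \<le> x / (u * u * (u + u))"
    using u v uv x by (intro divide_left_mono mult_mono) (auto intro!: mult_pos_pos)
  finally show ?thesis using u by (simp add: u_def v_def algebra_simps)
qed


lemma ff_upper:
  fixes t y z :: real assumes t: "t \<ge> 0" and y: "y > 0" and z: "z > 0"
  shows "1 / (sqrt ((t + y) * (t + z)) * (t + z)) \<le> 1 / ((t + sqrt (y * z)) * (t + z))"
proof -
  define g where "g = sqrt (y * z)"
  have g: "g > 0" "g * g = y * z" using y z by (auto simp: g_def)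
  have "2 * g \<le> y + z" using amgm[OF y z] by (simp add: g_def)
  then have "2 * g * t \<le> (y + z) * t" using t by (intro mult_right_mono) auto
  then have "(t + g)^2 \<le> (t + y) * (t + z)" using g by (simp add: power2_eq_square algebra_simps)
  then have "t + g \<le> sqrt ((t + y) * (t + z))" by (intro real_le_rsqrt)
  then have "(t + g) * (t + z) \<le> sqrt ((t + y) * (t + z)) * (t + z)" using t z by (intro mult_right_mono) auto
  then show ?thesis using g t y z unfolding g_def[symmetric]
    by (intro divide_left_mono) (auto intro!: mult_pos_pos)
qed

lemma ff_c:
  fixes t g z c :: real assumes t: "t \<ge> 0" and g: "g > 0" and z: "z > 0" and c: "c > 0"
    and gc: "g * z / (g + z) \<le> c"
  shows "1 / ((t + g) * (t + z)) \<le> 1 / (g * z) * (c / (t + c))"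
proof -
  have h1: "g * z \<le> c * (g + z)" using gc g z by (simp add: pos_divide_le_eq)
  have h2: "g * z * t \<le> c * (g + z) * t" using h1 t by (intro mult_right_mono)
  have h3: "0 \<le> c * t * t" using c t by simp
  have key: "g * z * (t + c) \<le> c * ((t + g) * (t + z))"
    using h2 h3 by (simp add: algebra_simps)
  have "1 / ((t + g) * (t + z)) = 1 / ((t + g) * (t + z))" ..
  have rhs: "1 / (g * z) * (c / (t + c)) = c / (g * z * (t + c))" by simp
  show ?thesis unfolding rhs using key g z c t
    by (simp add: divide_simps mult_pos_pos add_pos_nonneg) 
qed

lemma ff_lower:
  fixes t y z :: real assumes t: "t \<ge> 0" and y: "y > 0" and z: "z > 0"
  defines "a \<equiv> (y + z) / 2" and "g \<equiv> sqrt (y * z)"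
  shows "(g * g / a) / (g * (t + g * g / a) * (t + z)) \<le> 1 / (sqrt ((t + y) * (t + z)) * (t + z))"
proof -
  define b where "b = g * g / a"
  have g: "g > 0" "g * g = y * z" using y z by (auto simp: g_def)
  have a: "a > 0" using y z by (simp add: a_def)
  have ga: "g \<le> a" using amgm[OF y z] by (simp add: g_def a_def)
  have b: "b > 0" unfolding b_def using g(1) a by (intro divide_pos_pos mult_pos_pos)
  define q where "q = a / g"
  have q1: "q \<ge> 1" using ga g by (simp add: q_def)
  have qg: "q * g = a" using g by (simp add: q_def)
  have "q * q \<ge> 1" using q1 by (metis mult_mono' mult_1 order_trans zero_le_one less_eq_real_def)
  then have qq: "t * t \<le> q * q * (t * t)" using t by (metis mult_1 mult_right_mono zero_le_mult_iff)
  have gq: "g = q * b" using g a by (simp add: b_def q_def field_simps)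
  have e1: "g * (t + b) / b = q * t + g" using b gq by (simp add: field_simps)
  have "(t + y) * (t + z) \<le> (q * t + g)^2"
  proof -
    have "(q * t + g)^2 = q * q * (t * t) + 2 * (q * g) * t + g * g" by (simp add: power2_eq_square algebra_simps)
    also have "\<dots> = q * q * (t * t) + (y + z) * t + y * z" using qg g by (simp add: a_def)
    finally show ?thesis using qq by (simp add: algebra_simps)
  qed
  then have S: "sqrt ((t + y) * (t + z)) \<le> g * (t + b) / b"
    unfolding e1 using q1 t g by (intro real_le_lsqrt) auto
  have Spos: "sqrt ((t + y) * (t + z)) > 0" using t y z by simp
  have "1 / (g * (t + b) / b * (t + z)) \<le> 1 / (sqrt ((t + y) * (t + z)) * (t + z))"
    using S Spos t z g(1) b by (intro divide_left_mono mult_right_mono) (auto intro!: mult_pos_pos divide_pos_pos add_pos_nonneg)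
  moreover have "1 / (g * (t + b) / b * (t + z)) = b / (g * (t + b) * (t + z))" by simp
  ultimately show ?thesis by (simp add: b_def)
qed

lemma f0_minus:
  fixes t B Z G :: real assumes t: "t \<ge> 0" and B: "B > 0" and Z: "Z > 0" and G: "G > 0"
  shows "1 / (G * Z) - B / (G * (t + B) * (t + Z)) \<le> 1 / (G * Z) * t * (1 / (t + B) + B / (t + sqrt (B * Z))^2)"
proof -
  define M where "M = sqrt (B * Z)"
  have M: "M > 0" "M * M = B * Z" using B Z by (auto simp: M_def)
  have "2 * M \<le> B + Z" using amgm[OF B Z] by (simp add: M_def)
  then have "2 * M * t \<le> (B + Z) * t" using t by (intro mult_right_mono) auto
  then have tm: "(t + M)^2 \<le> (t + B) * (t + Z)" using M by (simp add: power2_eq_square algebra_simps)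
  have "B / ((t + B) * (t + Z)) \<le> B / (t + M)^2"
    using tm B M t Z by (intro divide_left_mono) (auto intro!: mult_pos_pos)
  then have i1: "(t + B + Z) / ((t + B) * (t + Z)) \<le> 1 / (t + B) + B / (t + M)^2"
  proof -
    have s1: "(t + B + Z) / ((t + B) * (t + Z)) = (t + Z) / ((t + B) * (t + Z)) + B / ((t + B) * (t + Z))"
      by (metis add.commute add.left_commute add_divide_distrib)
    have s2: "(t + Z) / ((t + B) * (t + Z)) = 1 / (t + B)" using t Z by simp
    have "(t + B + Z) / ((t + B) * (t + Z)) = 1 / (t + B) + B / ((t + B) * (t + Z))"
      using s1 s2 by simp
    then show ?thesis using \<open>B / ((t + B) * (t + Z)) \<le> B / (t + M)^2\<close> by simp
  qed
  have e: "1 / (G * Z) - B / (G * (t + B) * (t + Z)) = 1 / (G * Z) * t * ((t + B + Z) / ((t + B) * (t + Z)))"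
  proof -
    obtain P Q where P: "P = t + B" and Q: "Q = t + Z" by blast
    have "P > 0" "Q > 0" using P Q t B Z by auto
    then have "1 / (G * Z) - B / (G * P * Q) = 1 / (G * Z) * t * ((P + Z) / (P * Q))"
      using G Z by (simp add: field_simps) (simp add: P Q algebra_simps)
    then show ?thesis by (simp add: P Q add.assoc)
  qed
  have "1 / (G * Z) * t * ((t + B + Z) / ((t + B) * (t + Z))) \<le> 1 / (G * Z) * t * (1 / (t + B) + B / (t + M)^2)"
    using i1 t G Z by (intro mult_left_mono) auto
  then show ?thesis using e by (simp add: M_def)
qed


lemma const_ineq:
  fixes y z :: real assumes y: "y > 0" and z: "z > 0"
  defines "a \<equiv> (y + z) / 2" and "g \<equiv> sqrt (y * z)"
  defines "b \<equiv> g * g / a"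
  defines "m \<equiv> sqrt (b * z)"
  shows "1 / sqrt b + b / (2 * m * sqrt m) < (a / g) powr (3/2) * (1 + y / a) / sqrt a"
proof -
  have g: "g > 0" "g * g = y * z" using y z by (auto simp: g_def)
  have a: "a > 0" using y z by (simp add: a_def)
  have ga: "g \<le> a" using amgm[OF y z] by (simp add: g_def a_def)
  have b: "b > 0" unfolding b_def using g(1) a by (intro divide_pos_pos mult_pos_pos)
  have by': "b = y * z / a" using g by (simp add: b_def)
  have m: "m > 0" "m * m = b * z" using b z by (auto simp: m_def)
  have sm: "sqrt m > 0" "sqrt m * sqrt m = m" using m by auto
  have sg: "sqrt g > 0" "sqrt g * sqrt g = g" using g by auto
  have sa: "sqrt a > 0" "sqrt a * sqrt a = a" using a by auto
  have rhs: "(a / g) powr (3/2) * (1 + y / a) / sqrt a = (a + y) / (g * sqrt g)"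
  proof -
    have "(a / g) powr (3/2) = (a / g) * (sqrt a / sqrt g)" using a g by (simp add: powr32 real_sqrt_divide)
    then show ?thesis using a g sa sg by (simp add: field_simps)
  qed
  have sb: "sqrt b = g / sqrt a"
  proof -
    have "sqrt b = sqrt (g * g) / sqrt a" by (simp add: b_def real_sqrt_divide)
    then show ?thesis using g(1) by simp
  qed
  have t1: "1 / sqrt b \<le> a / (g * sqrt g)"
  proof -
    have "sqrt g \<le> sqrt a" using ga by simp
    then have "sqrt a * sqrt g \<le> sqrt a * sqrt a" using sa by (intro mult_left_mono) auto
    then have "sqrt a * sqrt g \<le> a" using sa by simp
    then show ?thesis unfolding sb using g sg sa by (simp add: field_simps)
  qed
  have k1: "b * g < 4 * y * m"
  proof -
    have "z < 16 * a" using y z by (simp add: a_def)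
    then have "y * z < 16 * y * a" using y by simp
    then have "b < 16 * y" using a by (simp add: by' pos_divide_less_eq)
    then have "b * (b * (y * z)) < (16 * y) * (b * (y * z))" using b y z by (intro mult_strict_right_mono) auto
    moreover have "(b * g)^2 = b * (b * (y * z))" by (simp add: power_mult_distrib power2_eq_square g(2) mult.assoc)
    moreover have "(4 * y * m)^2 = 16 * y * (b * (y * z))" by (simp add: power_mult_distrib power2_eq_square m(2) mult_ac)
    ultimately have sq: "(b * g)^2 < (4 * y * m)^2" by simp
    have nn: "0 \<le> 4 * y * m" using y m by simp
    show ?thesis by (rule power_less_imp_less_base[OF sq nn])
  qed
  have k2: "b * g * sqrt g < 2 * y * m * sqrt m"
  proof -
    have "(b * y * z) * (b * g) < (b * y * z) * (4 * y * m)" using k1 b y z by (intro mult_strict_left_mono) auto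
    moreover have "(b * g * sqrt g)^2 = (b * y * z) * (b * g)"
      using g by (simp add: power_mult_distrib power2_eq_square g(2) mult_ac)
    moreover have "(2 * y * m * sqrt m)^2 = (b * y * z) * (4 * y * m)"
      using m by (simp add: power_mult_distrib power2_eq_square m(2) mult_ac)
    ultimately have sq: "(b * g * sqrt g)^2 < (2 * y * m * sqrt m)^2" by simp
    have nn: "0 \<le> 2 * y * m * sqrt m" using y m by simp
    show ?thesis by (rule power_less_imp_less_base[OF sq nn])
  qed
  have t2: "b / (2 * m * sqrt m) < y / (g * sqrt g)"
    using k2 m sm g sg by (simp add: divide_simps)
  have "1 / sqrt b + b / (2 * m * sqrt m) < a / (g * sqrt g) + y / (g * sqrt g)" using t1 t2 by simp
  also have "\<dots> = (a + y) / (g * sqrt g)" by (simp add: add_divide_distrib)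
  finally show ?thesis using rhs by simp
qed



lemma G_upper_pt:
  fixes t x c f0 p v :: real
  assumes t: "t > 0" and x: "x > 0" and c: "c > 0"
    and p: "x / (2 * sqrt t * (t + x)) \<le> p"
    and v0: "0 \<le> v" and v1: "v \<le> f0 * (c / (t + c))"
  shows "p * v \<le> f0 * (p - x / 2 * (sqrt t / ((t + x) * (t + c))))"
proof -
  have p0: "0 \<le> p" using p t x by (smt (verit) divide_nonneg_pos mult_pos_pos real_sqrt_gt_0_iff)
  have "p * v \<le> p * (f0 * (c / (t + c)))" using v1 p0 by (rule mult_left_mono)
  also have "\<dots> = f0 * (p - p * (t / (t + c)))" using t c by (simp add: field_simps)
  also have "\<dots> \<le> f0 * (p - x / 2 * (sqrt t / ((t + x) * (t + c))))"
  proof -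
    have f0: "f0 \<ge> 0" using v0 v1 t c by (smt (verit) divide_pos_pos zero_le_mult_iff)
    have "x / (2 * sqrt t * (t + x)) * (t / (t + c)) \<le> p * (t / (t + c))"
      using p t c by (intro mult_right_mono) auto
    moreover have "x / (2 * sqrt t * (t + x)) * (t / (t + c)) = x / 2 * (sqrt t / ((t + x) * (t + c)))"
    proof -
      have st: "t / sqrt t = sqrt t" using t by (simp add: real_div_sqrt)
      have "x / (2 * sqrt t * (t + x)) * (t / (t + c)) = x / 2 * ((t / sqrt t) / ((t + x) * (t + c)))"
        using t x c by (simp add: field_simps)
      then show ?thesis unfolding st .
    qed
    ultimately show ?thesis using f0 by (intro mult_left_mono) auto
  qed
  finally show ?thesis .
qed

lemma G_lower_pt:
  fixes t x f0 p v Q :: real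
  assumes t: "t > 0" and x: "x \<ge> 0" and p0: "0 \<le> p" and p1: "p \<le> x / (2 * t * sqrt t)"
    and v0: "v \<le> f0" and v1: "f0 - v \<le> f0 * t * Q"
  shows "f0 * (p - x / 2 * (Q / sqrt t)) \<le> p * v"
proof -
  have "p * (f0 - v) \<le> x / (2 * t * sqrt t) * (f0 - v)"
    using p1 v0 by (intro mult_right_mono) auto
  also have "\<dots> \<le> x / (2 * t * sqrt t) * (f0 * t * Q)"
    using v1 x t by (intro mult_left_mono) auto
  also have "\<dots> = f0 * (x / 2 * (Q / sqrt t))" using t by (simp add: field_simps)
  finally have "p * (f0 - v) \<le> f0 * (x / 2 * (Q / sqrt t))" .
  then show ?thesis by (simp add: algebra_simps)
qed

lemma final_alg:
  fixes K f0 sx sa sc B T :: real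
  assumes f0: "f0 > 0" and sx: "sx > 0" and sa: "sa > 0" and sc: "sc > 0" and scsa: "sc < sa"
    and Kup: "K \<le> f0 * (2 * sx - sx * sx / 2 * (pi / (sx + sc)))"
    and Klo: "f0 * (2 * sx - sx * sx / 2 * (pi * B)) \<le> K"
    and ci: "B < T / sa"
  defines "\<theta> \<equiv> (1 - K / (2 * sx * f0)) * 4 / (pi * (sx / sa))"
  shows "1 / (1 + sx / sa) < \<theta>" "\<theta> < T" "- 3 / 2 * K = 3 * sx * f0 * (-1 + pi * \<theta> / 4 * (sx / sa))"
proof -
  define r where "r = sx / sa"
  have r: "r > 0" using sx sa by (simp add: r_def)
  define u where "u = 1 - K / (2 * sx * f0)"
  have th: "\<theta> = u * 4 / (pi * r)" by (simp add: \<theta>_def u_def r_def)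
  have d: "2 * sx * f0 > 0" using sx f0 by simp
  have pir: "pi * r > 0" using r by simp
  have "K / (2 * sx * f0) \<le> f0 * (2 * sx - sx * sx / 2 * (pi / (sx + sc))) / (2 * sx * f0)"
    using Kup d by (intro divide_right_mono) auto
  also have "\<dots> = 1 - pi * sx / (4 * (sx + sc))"
  proof -
    have e: "f0 * (2 * sx - sx * sx / 2 * (pi / P)) / (2 * sx * f0) = 1 - pi * sx / (4 * P)" if "P > 0" for P
      using that sx f0 by (simp add: field_simps)
    show ?thesis using e[of "sx + sc"] sx sc by simp
  qed
  finally have u1: "pi * sx / (4 * (sx + sc)) \<le> u" by (simp add: u_def)
  have u2: "pi * sx / (4 * (sx + sa)) < pi * sx / (4 * (sx + sc))"
    using sx sc sa scsa by (intro divide_strict_left_mono) auto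
  have u3: "pi * r / (4 * (1 + r)) = pi * sx / (4 * (sx + sa))" using sx sa by (simp add: r_def field_simps)
  have "pi * r / (4 * (1 + r)) < u" using u1 u2 u3 by simp
  then have "pi * r / (4 * (1 + r)) * 4 / (pi * r) < u * 4 / (pi * r)"
    using pir by (intro divide_strict_right_mono mult_strict_right_mono) auto
  moreover have "pi * r / (4 * (1 + r)) * 4 / (pi * r) = 1 / (1 + r)"
  proof -
    have e: "pi * r / (4 * P) * 4 / (pi * r) = 1 / P" if "P > 0" for P
      using that r by (simp add: field_simps)
    show ?thesis using e[of "1 + r"] r by simp
  qed
  ultimately show "1 / (1 + sx / sa) < \<theta>" using th by (simp add: r_def)
  have "f0 * (2 * sx - sx * sx / 2 * (pi * B)) / (2 * sx * f0) \<le> K / (2 * sx * f0)"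
    using Klo d by (intro divide_right_mono) auto
  moreover have "f0 * (2 * sx - sx * sx / 2 * (pi * B)) / (2 * sx * f0) = 1 - pi * sx / 4 * B"
    using sx f0 by (simp add: field_simps)
  ultimately have v1: "u \<le> pi * sx / 4 * B" unfolding u_def by linarith
  have v2: "pi * sx / 4 * B < pi * sx / 4 * (T / sa)" using ci sx by (intro mult_strict_left_mono) auto
  have "u < pi * sx / 4 * (T / sa)" using v1 v2 by linarith
  then have "u * 4 / (pi * r) < pi * sx / 4 * (T / sa) * 4 / (pi * r)"
    using pir by (intro divide_strict_right_mono mult_strict_right_mono) auto
  moreover have "pi * sx / 4 * (T / sa) * 4 / (pi * r) = T" using sx sa by (simp add: r_def field_simps)
  ultimately show "\<theta> < T" using th by simp
  have "pi * \<theta> / 4 * (sx / sa) = u" using th pir sx sa by (simp add: r_def field_simps)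
  then show "- 3 / 2 * K = 3 * sx * f0 * (-1 + pi * \<theta> / 4 * (sx / sa))"
    using sx f0 by (simp add: u_def field_simps)
qed

lemma main_pos:
  fixes x y z :: real
  assumes x: "x > 0" and y: "y > 0" and z: "z > 0"
  defines "a \<equiv> (y + z) / 2" and "g \<equiv> sqrt (y * z)"
  shows "\<exists>\<theta>::real. 1 / (1 + sqrt (x / a)) < \<theta> \<and> \<theta> < (a / g) powr (3/2) * (1 + y / a) \<and>
           carlson_RD x y z = carlson_RD 0 y z + 3 * sqrt x / (g * z) * (-1 + pi * \<theta> / 4 * sqrt (x / a))"
proof -
  have g: "g > 0" "g * g = y * z" using y z by (auto simp: g_def)
  have a: "a > 0" using y z by (simp add: a_def)
  have ga: "g \<le> a" using amgm[OF y z] by (simp add: g_def a_def)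
  define f0 where "f0 = 1 / (g * z)"
  have f0: "f0 > 0" using g z by (simp add: f0_def)
  define ff where "ff t = 1 / (sqrt ((t + y) * (t + z)) * (t + z))" for t
  define phi where "phi t = 1 / sqrt t - 1 / sqrt (t + x)" for t
  define F0 where "F0 t = ff t / sqrt t" for t
  define Fx where "Fx t = ff t / sqrt (t + x)" for t
  define G where "G t = phi t * ff t" for t
  define S where "S = {0::real<..}"
  have Sleb: "S \<in> sets lebesgue" by (simp add: S_def)
  have ff_pos: "ff t > 0" if "t > 0" for t using that y z by (simp add: ff_def)
  have ff_up: "ff t \<le> 1 / ((t + g) * (t + z))" if "t > 0" for t
    using ff_upper[of t y z] that y z by (simp add: ff_def g_def)
  have ff_f0: "ff t \<le> f0" if "t > 0" for t
  proof -
    have "g * z \<le> (t + g) * (t + z)" using that g z by (intro mult_mono) auto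
    then have "1 / ((t + g) * (t + z)) \<le> 1 / (g * z)" using g z that by (intro divide_left_mono) (auto intro!: mult_pos_pos)
    then show ?thesis using ff_up[OF that] by (simp add: f0_def)
  qed
  have phi0: "phi t \<ge> 0" if "t > 0" for t using phi_nonneg[of t x] that x by (simp add: phi_def)
  have G_eq: "F0 t - G t = Fx t" if "t > 0" for t
    using that x by (simp add: F0_def Fx_def G_def phi_def field_simps)
  have cont_ff: "continuous_on S ff"
    unfolding ff_def S_def using y z by (auto intro!: continuous_intros)
  have cont_phi: "continuous_on S phi"
    unfolding phi_def S_def using x by (auto intro!: continuous_intros)
  have cont_F0: "continuous_on S F0"
    unfolding F0_def using cont_ff by (auto intro!: continuous_intros simp: S_def)
  have cont_G: "continuous_on S G"
    unfolding G_def using cont_ff cont_phi by (auto intro!: continuous_intros)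
  have bnd0: "(\<lambda>t. 1 / z * (1 / (sqrt t * (t + g)))) integrable_on S"
    using has_integral_mult_right[OF I3[OF g(1)], of "1 / z"] unfolding S_def by blast
  have F0_int: "F0 integrable_on S"
  proof (rule measurable_bounded_by_integrable_imp_integrable_real[OF _ bnd0 _ Sleb])
    show "F0 \<in> borel_measurable (lebesgue_on S)"
      by (rule continuous_imp_measurable_on_sets_lebesgue[OF cont_F0 Sleb])
    fix t assume "t \<in> S"
    then have t: "t > 0" by (simp add: S_def)
    have "ff t \<le> 1 / ((t + g) * z)"
      using ff_up[OF t] t g z by (smt (verit) divide_left_mono mult_left_mono mult_pos_pos)
    then have "ff t / sqrt t \<le> 1 / ((t + g) * z) / sqrt t" using t by (intro divide_right_mono) auto
    then show "\<bar>F0 t\<bar> \<le> 1 / z * (1 / (sqrt t * (t + g)))"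
      using ff_pos[OF t] t by (simp add: F0_def field_simps)
  qed
  have phi_has: "(phi has_integral 2 * sqrt x) S" unfolding phi_def S_def by (rule I1[OF x])
  have G_int: "G integrable_on S"
  proof (rule measurable_bounded_by_integrable_imp_integrable_real[OF _ _ _ Sleb])
    show "G \<in> borel_measurable (lebesgue_on S)"
      by (rule continuous_imp_measurable_on_sets_lebesgue[OF cont_G Sleb])
    show "(\<lambda>t. f0 * phi t) integrable_on S"
      using has_integral_mult_right[OF phi_has, of f0] by blast
    fix t assume "t \<in> S"
    then have t: "t > 0" by (simp add: S_def)
    show "\<bar>G t\<bar> \<le> f0 * phi t"
      using ff_pos[OF t] ff_f0[OF t] phi0[OF t] by (simp add: G_def abs_mult mult.commute mult_right_mono)
  qed
  define K where "K = integral S G"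
  define I0 where "I0 = integral S F0"
  have G_has: "(G has_integral K) S" using G_int by (simp add: K_def integrable_integral)
  have F0_has: "(F0 has_integral I0) S" using F0_int by (simp add: I0_def integrable_integral)
  have Fx_has: "(Fx has_integral I0 - K) S"
  proof -
    have "((\<lambda>t. F0 t - G t) has_integral I0 - K) S" by (rule has_integral_diff[OF F0_has G_has])
    then show ?thesis by (rule has_integral_cong[THEN iffD1, rotated]) (simp add: G_eq S_def)
  qed
  have RD0: "carlson_RD 0 y z = 3 / 2 * I0"
  proof -
    have "integral {0<..} (\<lambda>t. 1 / (sqrt ((t + 0) * (t + y)) * (t + z) powr (3/2))) = integral S F0"
      unfolding S_def
    proof (rule integral_cong)
      fix t :: real assume "t \<in> {0<..}"
      then have t: "t > 0" by simp
      show "1 / (sqrt ((t + 0) * (t + y)) * (t + z) powr (3/2)) = F0 t"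
        using F_eq[of t 0 y z] t y z by (simp add: F0_def ff_def mult_ac)
    qed
    then show ?thesis by (simp add: carlson_RD_def I0_def)
  qed
  have RDx: "carlson_RD x y z = 3 / 2 * (I0 - K)"
  proof -
    have "integral {0<..} (\<lambda>t. 1 / (sqrt ((t + x) * (t + y)) * (t + z) powr (3/2))) = integral S Fx"
      unfolding S_def
    proof (rule integral_cong)
      fix t :: real assume "t \<in> {0<..}"
      then have t: "t > 0" by simp
      show "1 / (sqrt ((t + x) * (t + y)) * (t + z) powr (3/2)) = Fx t"
        using F_eq[of t x y z] t x y z by (simp add: Fx_def ff_def mult_ac)
    qed
    then show ?thesis using Fx_has by (simp add: carlson_RD_def integral_unique)
  qed
  have RDdiff: "carlson_RD x y z = carlson_RD 0 y z - 3 / 2 * K"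
    using RD0 RDx by (simp add: algebra_simps)

  define c0 where "c0 = g * z / (g + z)"
  have c0: "c0 > 0" "c0 < a"
  proof -
    show "c0 > 0" using g z by (simp add: c0_def)
    have "g * z < g * (g + z)" using g(1) z by (simp add: algebra_simps)
    then have "c0 < g" using g z by (simp add: c0_def pos_divide_less_eq)
    then show "c0 < a" using ga by simp
  qed
  obtain c where c: "c > 0" "c0 \<le> c" "c < a" "c \<noteq> x"
  proof (cases "x = c0")
    case True
    show ?thesis by (rule that[of "(c0 + a) / 2"]) (use c0 True in auto)
  next
    case False
    show ?thesis by (rule that[of c0]) (use c0 False in auto)
  qed
  define Kup where "Kup = f0 * (2 * sqrt x - x / 2 * (pi / (sqrt x + sqrt c)))"
  have Kup_has: "((\<lambda>t. f0 * (phi t - x / 2 * (sqrt t / ((t + x) * (t + c))))) has_integral Kup) S"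
    unfolding Kup_def
    by (intro has_integral_mult_right has_integral_diff phi_has)
       (unfold S_def, rule I2[OF x c(1) c(4)[symmetric]])
  have K_up: "K \<le> Kup"
  proof (rule has_integral_le[OF G_has Kup_has])
    fix t assume "t \<in> S"
    then have t: "t > 0" by (simp add: S_def)
    have v1: "ff t \<le> f0 * (c / (t + c))"
      using ff_up[OF t] ff_c[of t g z c] t g z c by (simp add: f0_def c0_def)
    show "G t \<le> f0 * (phi t - x / 2 * (sqrt t / ((t + x) * (t + c))))"
      unfolding G_def
      by (rule G_upper_pt[OF t x c(1) _ less_imp_le[OF ff_pos[OF t]] v1])
         (use phi_lower[OF t x] in \<open>simp add: phi_def\<close>)
  qed
  define b where "b = g * g / a"
  define m where "m = sqrt (b * z)"
  have b: "b > 0" unfolding b_def using g(1) a by (intro divide_pos_pos mult_pos_pos)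
  have m: "m > 0" using b z by (simp add: m_def)
  define Klo where "Klo = f0 * (2 * sqrt x - x / 2 * (pi / sqrt b + b * (pi / (2 * m * sqrt m))))"
  have Klo_has: "((\<lambda>t. f0 * (phi t - x / 2 * (1 / (sqrt t * (t + b)) + b * (1 / (sqrt t * (t + m)^2))))) has_integral Klo) S"
    unfolding Klo_def S_def
    by (intro has_integral_mult_right has_integral_diff has_integral_add I3 I4 b m phi_has[unfolded S_def])
  have K_lo: "Klo \<le> K"
  proof (rule has_integral_le[OF Klo_has G_has])
    fix t assume "t \<in> S"
    then have t: "t > 0" by (simp add: S_def)
    define Q where "Q = 1 / (t + b) + b / (t + m)^2"
    have lo: "b / (g * (t + b) * (t + z)) \<le> ff t"
      using ff_lower[of t y z] t y z by (simp add: ff_def b_def a_def g_def)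
    have fm: "f0 - b / (g * (t + b) * (t + z)) \<le> f0 * t * Q"
      using f0_minus[of t b z g] t b z g by (simp add: f0_def Q_def m_def)
    have v1: "f0 - ff t \<le> f0 * t * Q" using lo fm by linarith
    have "f0 * (phi t - x / 2 * (Q / sqrt t)) \<le> phi t * ff t"
      by (rule G_lower_pt[OF t less_imp_le[OF x] phi0[OF t] _ ff_f0[OF t] v1])
         (use phi_upper[OF t less_imp_le[OF x]] in \<open>simp add: phi_def\<close>)
    moreover have "Q / sqrt t = 1 / (sqrt t * (t + b)) + b * (1 / (sqrt t * (t + m)^2))"
      by (simp add: Q_def add_divide_distrib mult.commute)
    ultimately show "f0 * (phi t - x / 2 * (1 / (sqrt t * (t + b)) + b * (1 / (sqrt t * (t + m)^2)))) \<le> G t"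
      by (simp add: G_def)
  qed
  define B where "B = 1 / sqrt b + b / (2 * m * sqrt m)"
  define T where "T = (a / g) powr (3/2) * (1 + y / a)"
  have ci: "B < T / sqrt a"
    using const_ineq[OF y z, folded a_def g_def, folded b_def, folded m_def]
    by (simp add: B_def T_def)
  have Kup': "K \<le> f0 * (2 * sqrt x - sqrt x * sqrt x / 2 * (pi / (sqrt x + sqrt c)))"
    using K_up x by (simp add: Kup_def)
  have Klo': "f0 * (2 * sqrt x - sqrt x * sqrt x / 2 * (pi * B)) \<le> K"
  proof -
    have "Klo = f0 * (2 * sqrt x - sqrt x * sqrt x / 2 * (pi * B))"
      using x by (simp add: Klo_def B_def distrib_left)
    then show ?thesis using K_lo by simp
  qed
  have scsa: "sqrt c < sqrt a" using c by simp
  note FA = final_alg[OF f0 _ _ _ scsa Kup' Klo' ci]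
  define \<theta> where "\<theta> = (1 - K / (2 * sqrt x * f0)) * 4 / (pi * (sqrt x / sqrt a))"
  have FA1: "1 / (1 + sqrt x / sqrt a) < \<theta>" using FA(1) x a c by (simp add: \<theta>_def)
  have FA2: "\<theta> < T" using FA(2) x a c by (simp add: \<theta>_def)
  have FA3: "- 3 / 2 * K = 3 * sqrt x * f0 * (-1 + pi * \<theta> / 4 * (sqrt x / sqrt a))"
    using FA(3) x a c by (simp add: \<theta>_def)
  have sxa: "sqrt (x / a) = sqrt x / sqrt a" by (simp add: real_sqrt_divide)
  have "carlson_RD x y z = carlson_RD 0 y z + 3 * sqrt x / (g * z) * (-1 + pi * \<theta> / 4 * sqrt (x / a))"
    using RDdiff FA3 by (simp add: sxa f0_def)
  then show ?thesis using FA1 FA2 unfolding sxa T_def by blast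
qed


theorem mainTheorem9:
  fixes x y z :: real
  assumes "x \<ge> 0" and "y > 0" and "z > 0"
  defines "a \<equiv> (y + z) / 2" and "g \<equiv> sqrt (y * z)"
  shows "\<exists>\<theta>::real. 1 / (1 + sqrt (x / a)) < \<theta> \<and> \<theta> < (a / g) powr (3/2) * (1 + y / a) \<and>
           carlson_RD x y z = carlson_RD 0 y z + 3 * sqrt x / (g * z) * (-1 + pi * \<theta> / 4 * sqrt (x / a))"
proof (cases "x = 0")
  case False
  then have "x > 0" using assms(1) by simp
  then show ?thesis using main_pos[OF _ assms(2,3)] unfolding a_def g_def by blast
next
  case True
  have y: "y > 0" and z: "z > 0" using assms by auto
  have g: "g > 0" using y z by (simp add: g_def)
  have a: "a > 0" using y z by (simp add: a_def)
  have ga: "g \<le> a" using amgm[OF y z] by (simp add: g_def a_def)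
  define T where "T = (a / g) powr (3/2) * (1 + y / a)"
  have P: "1 \<le> (a / g) powr (3/2)" using ga g by (intro ge_one_powr_ge_zero) auto
  have Q: "1 < 1 + y / a" using y a by simp
  have "1 * (1 + y / a) \<le> (a / g) powr (3/2) * (1 + y / a)" using P Q by (intro mult_right_mono) auto
  then have "1 + y / a \<le> T" by (simp add: T_def)
  then have T1: "1 < T" using Q by linarith
  show ?thesis
  proof (intro exI conjI)
    show "1 / (1 + sqrt (x / a)) < (1 + T) / 2" using T1 True by simp
    have "(1 + T) / 2 < T" using T1 by (simp add: field_simps)
    then show "(1 + T) / 2 < (a / g) powr (3/2) * (1 + y / a)" by (simp only: T_def)
    show "carlson_RD x y z = carlson_RD 0 y z + 3 * sqrt x / (g * z) * (-1 + pi * ((1 + T) / 2) / 4 * sqrt (x / a))"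
      using True by simp
  qed
qed

end
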